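(* Let $\lambda\in\mathbb{R}$. Let $\psi\in C^\infty\big(\mathbb{R}^n\times(\mathbb{R}^n\setminus\{0\})\big)$ be positively homogeneous of degree $\lambda$ in $\xi$, i.e. $\psi(x,c\xi)=c^\lambda\psi(x,\xi)$ for $c>0$, and satisfy $\psi(x+\tau\xi,\xi)=\psi(x,\xi)$ for all $\tau\in\mathbb{R}$. Let $\varphi\in C^\infty(T\mathbb{S}^{n-1})$ be the restriction of $\psi$ to $T\mathbb{S}^{n-1}$. Then, for all $1\le i,j\le n$, $$(J_{ij}\psi)|_{T\mathbb{S}^{n-1}}=\big(\mathcal{J}_{ij}-(\lambda+1)(\xi_iX_j-\xi_jX_i)\big)\varphi.$$
   Context: $T\mathbb{S}^{n-1}=\{(x,\xi)\in\mathbb{R}^n\times\mathbb{R}^n:|\xi|=1,\ \langle x,\xi\rangle=0\}$. The John operators on $\mathbb{R}^n\times\mathbb{R}^n$ are $$J_{ij}=\frac{\partial^2}{\partial x^i\partial\xi^j}-\frac{\partial^2}{\partial x^j\partial\xi^i}.$$ Define vector fields on $\mathbb{R}^n\times\mathbb{R}^n$ (summation over $p$) $$\tilde X_i=\partial/\partial x^i-\xi_i\xi^p\,\partial/\partial x^p,\qquad \tilde\Xi_i=\partial/\partial\xi^i-x_i\xi^p\,\partial/\partial x^p-\xi_i\xi^p\,\partial/\partial\xi^p.$$ These are tangent to $T\mathbb{S}^{n-1}$; $X_i,\Xi_i$ are their restrictions to $T\mathbb{S}^{n-1}$, and $\mathcal{J}_{ij}=X_i\Xi_j-X_j\Xi_i$.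 Here $\xi_i=\xi^i$, and in $\xi_iX_j$, $\xi_i$ acts by multiplication. *)

theory Defs
  imports "HOL-Analysis.Analysis"
begin

definition dderiv :: "('a::real_normed_vector \<Rightarrow> real) \<Rightarrow> 'a \<Rightarrow> 'a \<Rightarrow> real" where
  "dderiv f v p = frechet_derivative f (at p) v"

fun iter_dderiv :: "'a::real_normed_vector list \<Rightarrow> ('a \<Rightarrow> real) \<Rightarrow> 'a \<Rightarrow> real" where
  "iter_dderiv [] f = f"
| "iter_dderiv (v # vs) f = dderiv (iter_dderiv vs f) v"

definition smooth_on :: "'a::real_normed_vector set \<Rightarrow> ('a \<Rightarrow> real) \<Rightarrow> bool" where
  "smooth_on U f \<longleftrightarrow> (\<forall>vs. iter_dderiv vs f differentiable_on U)"

definition dx :: "'n::finite \<Rightarrow> (real^'n) \<times> (real^'n)" where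
  "dx i = (axis i 1, 0)"

definition dxi :: "'n::finite \<Rightarrow> (real^'n) \<times> (real^'n)" where
  "dxi i = (0, axis i 1)"

definition John :: "'n::finite \<Rightarrow> 'n \<Rightarrow> ((real^'n) \<times> (real^'n) \<Rightarrow> real) \<Rightarrow> (real^'n) \<times> (real^'n) \<Rightarrow> real" where
  "John i j f = (\<lambda>p. dderiv (dderiv f (dxi j)) (dx i) p - dderiv (dderiv f (dxi i)) (dx j) p)"

definition TS :: "((real^'n::finite) \<times> (real^'n)) set" where
  "TS = {(x, \<xi>). norm \<xi> = 1 \<and> x \<bullet> \<xi> = 0}"

definition Xt :: "'n::finite \<Rightarrow> (real^'n) \<times> (real^'n) \<Rightarrow> (real^'n) \<times> (real^'n)" where
  "Xt i = (\<lambda>(x, \<xi>). (axis i 1 - (\<xi> $ i) *\<^sub>R \<xi>, 0))"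

definition Xit :: "'n::finite \<Rightarrow> (real^'n) \<times> (real^'n) \<Rightarrow> (real^'n) \<times> (real^'n)" where
  "Xit i = (\<lambda>(x, \<xi>). (- ((x $ i) *\<^sub>R \<xi>), axis i 1 - (\<xi> $ i) *\<^sub>R \<xi>))"

definition vf_on :: "'a::real_normed_vector set \<Rightarrow> ('a \<Rightarrow> 'a) \<Rightarrow> ('a \<Rightarrow> real) \<Rightarrow> 'a \<Rightarrow> real" where
  "vf_on M V f = (\<lambda>p. frechet_derivative f (at p within M) (V p))"

abbreviation Xop where "Xop i \<equiv> vf_on TS (Xt i)"
abbreviation Xiop where "Xiop i \<equiv> vf_on TS (Xit i)"

definition calJ :: "'n::finite \<Rightarrow> 'n \<Rightarrow> ((real^'n) \<times> (real^'n) \<Rightarrow> real) \<Rightarrow> (real^'n) \<times> (real^'n) \<Rightarrow> real" where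
  "calJ i j f = (\<lambda>p. Xop i (Xiop j f) p - Xop j (Xiop i f) p)"

end

theory Submission
  imports Defs
begin

lemma curve_unique:
  assumes d1: "(h has_derivative D1) (at p within S)" and d2: "(h has_derivative D2) (at p within S)"
    and inS: "\<And>t. \<gamma> t \<in> S" and g0: "\<gamma> 0 = p"
    and dg: "(\<gamma> has_derivative (\<lambda>t. t *\<^sub>R v)) (at 0)"
  shows "D1 v = D2 v"
proof -
  have sub: "range \<gamma> \<subseteq> S" using inS by auto
  have a1: "(h has_derivative D1) (at (\<gamma> 0) within range \<gamma>)"
    using has_derivative_subset[OF d1 sub] g0 by simp
  have a2: "(h has_derivative D2) (at (\<gamma> 0) within range \<gamma>)"
    using has_derivative_subset[OF d2 sub] g0 by simp
  have dg': "(\<gamma> has_derivative (\<lambda>t. t *\<^sub>R v)) (at 0 within UNIV)" using dg by simp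
  have c1: "((h \<circ> \<gamma>) has_derivative (D1 \<circ> (\<lambda>t. t *\<^sub>R v))) (at 0)"
    using diff_chain_within[OF dg' a1] by simp
  have c2: "((h \<circ> \<gamma>) has_derivative (D2 \<circ> (\<lambda>t. t *\<^sub>R v))) (at 0)"
    using diff_chain_within[OF dg' a2] by simp
  have "D1 \<circ> (\<lambda>t. t *\<^sub>R v) = D2 \<circ> (\<lambda>t. t *\<^sub>R v)" using has_derivative_unique[OF c1 c2] .
  then show ?thesis by (metis comp_apply scaleR_one)
qed

lemma TS_deriv:
  assumes pS: "p \<in> S" and eq: "\<And>q. q \<in> S \<Longrightarrow> h q = H q"
    and dH: "(H has_derivative H') (at p)"
    and inS: "\<And>t. \<gamma> t \<in> S" and g0: "\<gamma> 0 = p"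
    and dg: "(\<gamma> has_derivative (\<lambda>t. t *\<^sub>R V p)) (at 0)"
  shows "vf_on S V h p = H' (V p)"
proof -
  have "(H has_derivative H') (at p within S)" using dH has_derivative_at_withinI by blast
  then have dh: "(h has_derivative H') (at p within S)"
    by (rule has_derivative_transform_within[where d=1]) (auto simp: pS eq)
  then have "h differentiable (at p within S)" unfolding differentiable_def by blast
  then have dh2: "(h has_derivative frechet_derivative h (at p within S)) (at p within S)"
    using frechet_derivative_works by blast
  show ?thesis unfolding vf_on_def using curve_unique[OF dh2 dh inS g0 dg] .
qed

lemma dir_deriv:
  assumes "(f has_derivative f') (at q)"
  shows "((\<lambda>t. f (q + t *\<^sub>R v)) has_real_derivative f' v) (at 0)"
proof -
  have g: "((\<lambda>t::real. q + t *\<^sub>R v) has_derivative (\<lambda>t. t *\<^sub>R v)) (at 0)"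
    by (auto intro!: derivative_eq_intros)
  have f: "(f has_derivative f') (at ((\<lambda>t::real. q + t *\<^sub>R v) 0))" using assms by simp
  have "((f \<circ> (\<lambda>t. q + t *\<^sub>R v)) has_derivative (f' \<circ> (\<lambda>t. t *\<^sub>R v))) (at 0)"
    using has_derivative_compose[OF g f] by (simp add: comp_def)
  moreover have "f' \<circ> (\<lambda>t. t *\<^sub>R v) = (\<lambda>t. t * f' v)"
    using has_derivative_bounded_linear[OF assms] by (auto simp: comp_def linear_scale dest!: bounded_linear.linear)
  ultimately have "((\<lambda>t. f (q + t *\<^sub>R v)) has_derivative (\<lambda>t. t * f' v)) (at 0)" by (simp add: comp_def)
  moreover have "(\<lambda>t. t * f' v) = (*) (f' v)" by (rule ext) (simp add: mult.commute)
  ultimately show ?thesis by (simp add: has_field_derivative_def)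
qed

lemma dir_unique:
  assumes "(f has_derivative f') (at q)" and e: "e > 0"
    and eq: "\<And>t. \<bar>t\<bar> < e \<Longrightarrow> f (q + t *\<^sub>R v) = c t"
    and dc: "(c has_real_derivative d) (at 0)"
  shows "f' v = d"
proof -
  have "(c has_real_derivative f' v) (at 0)"
    using dir_deriv[OF assms(1), of v]
    unfolding has_field_derivative_def
    by (rule has_derivative_transform_within_open[where s="ball 0 e"]) (auto simp: e eq)
  then show ?thesis using DERIV_unique dc by blast
qed

lemma TS_iff: "(x, \<xi>) \<in> TS \<longleftrightarrow> norm \<xi> = 1 \<and> x \<bullet> \<xi> = 0"
  by (simp add: TS_def)

lemma curve_Xt:
  assumes "p \<in> TS"
  shows "\<exists>\<gamma>. (\<forall>t. \<gamma> t \<in> TS) \<and> \<gamma> 0 = p \<and> (\<gamma> has_derivative (\<lambda>t. t *\<^sub>R Xt i p)) (at 0)"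
proof -
  obtain x \<xi> where p: "p = (x, \<xi>)" by fastforce
  have n: "norm \<xi> = 1" and o: "x \<bullet> \<xi> = 0" using assms p by (auto simp: TS_iff)
  have xx: "\<xi> \<bullet> \<xi> = 1" using n by (simp add: norm_eq_sqrt_inner)
  define w where "w = axis i 1 - (\<xi> $ i) *\<^sub>R \<xi>"
  have wo: "w \<bullet> \<xi> = 0" unfolding w_def by (simp add: inner_diff_left inner_axis' xx)
  have X: "Xt i p = (w, 0)" by (simp add: Xt_def p w_def)
  show ?thesis
  proof (intro exI conjI allI)
    fix t :: real
    show "(\<lambda>t. p + t *\<^sub>R Xt i p) t \<in> TS"
      using n o wo unfolding X by (simp add: p TS_iff inner_add_left)
  next
    show "(\<lambda>t. p + t *\<^sub>R Xt i p) 0 = p" by simp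
    show "((\<lambda>t. p + t *\<^sub>R Xt i p) has_derivative (\<lambda>t. t *\<^sub>R Xt i p)) (at 0)"
      by (auto intro!: derivative_eq_intros)
  qed
qed

lemma curve_Xit:
  assumes "p \<in> TS"
  shows "\<exists>\<gamma>. (\<forall>t. \<gamma> t \<in> TS) \<and> \<gamma> 0 = p \<and> (\<gamma> has_derivative (\<lambda>t. t *\<^sub>R Xit i p)) (at 0)"
proof -
  obtain x \<xi> where p: "p = (x, \<xi>)" by fastforce
  have n: "norm \<xi> = 1" and o: "x \<bullet> \<xi> = 0" using assms p by (auto simp: TS_iff)
  have xx: "\<xi> \<bullet> \<xi> = 1" using n by (simp add: norm_eq_sqrt_inner)
  define w where "w = axis i 1 - (\<xi> $ i) *\<^sub>R \<xi>"
  have wo: "\<xi> \<bullet> w = 0" unfolding w_def by (simp add: inner_diff_right inner_axis xx)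
  have xw: "x \<bullet> w = x $ i" unfolding w_def by (simp add: inner_diff_right inner_axis o)
  have X: "Xit i p = (- ((x $ i) *\<^sub>R \<xi>), w)" by (simp add: Xit_def p w_def)
  define u where "u = (\<lambda>t::real. \<xi> + t *\<^sub>R w)"
  have uxi: "u t \<bullet> \<xi> = 1" for t unfolding u_def by (simp add: inner_add_left xx inner_commute[of w] wo)
  have unz: "u t \<noteq> 0" for t using uxi[of t] by auto
  define \<eta> where "\<eta> = (\<lambda>t. (1 / norm (u t)) *\<^sub>R u t)"
  have eta_n: "norm (\<eta> t) = 1" for t unfolding \<eta>_def using unz[of t] by simp
  have eta0: "\<eta> 0 = \<xi>" unfolding \<eta>_def u_def using n by simp
  have du: "(u has_derivative (\<lambda>t. t *\<^sub>R w)) (at 0)" unfolding u_def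
    by (auto intro!: derivative_eq_intros)
  have dn: "((\<lambda>t. norm (u t)) has_derivative (\<lambda>t. 0)) (at 0)"
  proof -
    have "((\<lambda>t. norm (u t)) has_derivative (\<lambda>t. sgn (u 0) \<bullet> (t *\<^sub>R w))) (at 0)"
      using has_derivative_compose[OF du has_derivative_norm[OF unz[of 0]]] by (simp add: inner_commute)
    moreover have "u 0 = \<xi>" by (simp add: u_def)
    ultimately show ?thesis using wo by (simp add: sgn_div_norm n)
  qed
  have nu0: "norm (u 0) = 1" by (simp add: u_def n)
  have deta: "(\<eta> has_derivative (\<lambda>t. t *\<^sub>R w)) (at 0)"
    unfolding \<eta>_def
    apply (rule derivative_eq_intros dn du refl | simp add: unz)+
    apply (simp add: unz nu0)
    done
  define \<gamma> where "\<gamma> = (\<lambda>t. (x - (x \<bullet> \<eta> t) *\<^sub>R \<eta> t, \<eta> t))"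
  show ?thesis
  proof (intro exI conjI allI)
    fix t :: real
    show "\<gamma> t \<in> TS" unfolding \<gamma>_def TS_iff using eta_n[of t]
      by (simp add: inner_diff_left norm_eq_sqrt_inner)
  next
    show "\<gamma> 0 = p" unfolding \<gamma>_def using eta0 o p by simp
    show "(\<gamma> has_derivative (\<lambda>t. t *\<^sub>R Xit i p)) (at 0)"
      unfolding \<gamma>_def
      apply (rule derivative_eq_intros deta refl)+
      apply (simp add: eta0 o xw X)
      done
  qed
qed

lemma psi_facts:
  fixes \<psi> :: "(real^'n) \<times> (real^'n) \<Rightarrow> real" and lam :: real
  assumes smooth: "smooth_on (UNIV \<times> (UNIV - {0})) \<psi>"
    and homog: "\<And>x \<xi> c. \<xi> \<noteq> 0 \<Longrightarrow> c > 0 \<Longrightarrow> \<psi> (x, c *\<^sub>R \<xi>) = c powr lam * \<psi> (x, \<xi>)"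
    and transl: "\<And>x \<xi> \<tau>. \<xi> \<noteq> 0 \<Longrightarrow> \<psi> (x + \<tau> *\<^sub>R \<xi>, \<xi>) = \<psi> (x, \<xi>)"
    and xinz: "\<xi> \<noteq> 0"
  shows "(\<psi> has_derivative frechet_derivative \<psi> (at (x,\<xi>))) (at (x,\<xi>))" (is ?A)
    and "(dderiv \<psi> v has_derivative frechet_derivative (dderiv \<psi> v) (at (x,\<xi>))) (at (x,\<xi>))" (is ?B)
    and "frechet_derivative \<psi> (at (x,\<xi>)) (\<xi>, 0) = 0" (is ?C)
    and "frechet_derivative \<psi> (at (x,\<xi>)) (0, \<xi>) = lam * \<psi> (x,\<xi>)" (is ?D)
    and "frechet_derivative (dderiv \<psi> (dxi j)) (at (x,\<xi>)) (\<xi>, 0) = - frechet_derivative \<psi> (at (x,\<xi>)) (dx j)" (is ?E)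
proof -
  define U :: "((real^'n) \<times> (real^'n)) set" where "U = UNIV \<times> (UNIV - {0})"
  have oU: "open U" unfolding U_def by (intro open_Times) auto
  have dpsi: "(\<psi> has_derivative frechet_derivative \<psi> (at q)) (at q)" if "snd q \<noteq> 0" for q
  proof -
    have "\<psi> differentiable_on U" using smooth[unfolded smooth_on_def, rule_format, of "[]"] U_def by simp
    then have "\<psi> differentiable at q" using differentiable_on_eq_differentiable_at[OF oU] that
      by (cases q) (auto simp: U_def)
    then show ?thesis using frechet_derivative_works by blast
  qed
  have dP: "(dderiv \<psi> w has_derivative frechet_derivative (dderiv \<psi> w) (at q)) (at q)" if "snd q \<noteq> 0" for q w
  proof -
    have "dderiv \<psi> w differentiable_on U" using smooth[unfolded smooth_on_def, rule_format, of "[w]"] U_def by simp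
    then have "dderiv \<psi> w differentiable at q" using differentiable_on_eq_differentiable_at[OF oU] that
      by (cases q) (auto simp: U_def)
    then show ?thesis using frechet_derivative_works by blast
  qed
  show ?A using dpsi xinz by simp
  show ?B using dP xinz by simp
  define D1 where "D1 = (\<lambda>q. frechet_derivative \<psi> (at q))"
  have lin1: "linear (D1 q)" if "snd q \<noteq> 0" for q
    using dpsi[OF that] unfolding D1_def by (blast dest: has_derivative_bounded_linear bounded_linear.linear)
  have C: "D1 (y, \<xi>) (\<xi>, 0) = 0" for y
  proof -
    have "D1 (y, \<xi>) (\<xi>, 0) = 0"
      unfolding D1_def
      by (rule dir_unique[OF dpsi[of "(y,\<xi>)"], where e=1 and c="\<lambda>t. \<psi> (y,\<xi>)"])
         (auto simp: xinz transl)
    then show ?thesis .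
  qed
  show ?C using C[of x] by (simp add: D1_def)
  show ?D
  proof (rule dir_unique[OF dpsi[of "(x,\<xi>)"], where e=1 and c="\<lambda>t. (1+t) powr lam * \<psi> (x,\<xi>)"])
    show "snd (x, \<xi>) \<noteq> 0" using xinz by simp
    show "(0::real) < 1" by simp
  next
    fix t :: real assume "\<bar>t\<bar> < 1"
    then have "1 + t > 0" by simp
    then show "\<psi> ((x, \<xi>) + t *\<^sub>R (0, \<xi>)) = (1 + t) powr lam * \<psi> (x, \<xi>)"
      using homog[OF xinz, of "1+t" x] by (simp add: algebra_simps)
  next
    show "((\<lambda>t. (1 + t) powr lam * \<psi> (x, \<xi>)) has_real_derivative lam * \<psi> (x, \<xi>)) (at 0)"
      by (rule derivative_eq_intros refl | simp)+
  qed
  have key: "\<tau> * D1 (x + \<tau> *\<^sub>R \<xi>, \<xi>) (dx j) + D1 (x + \<tau> *\<^sub>R \<xi>, \<xi>) (dxi j) = D1 (x, \<xi>) (dxi j)" for \<tau>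
  proof -
    define q' where "q' = (x + \<tau> *\<^sub>R \<xi>, \<xi>)"
    define v where "v = (\<tau> *\<^sub>R axis j (1::real), axis j (1::real))"
    have v: "v = \<tau> *\<^sub>R dx j + dxi j" by (simp add: v_def dx_def dxi_def)
    have "D1 q' v = D1 (x, \<xi>) (dxi j)"
      unfolding D1_def
    proof (rule dir_unique[OF dpsi[of q'], where e="norm \<xi>" and c="\<lambda>s. \<psi> ((x,\<xi>) + s *\<^sub>R dxi j)"])
      show "snd q' \<noteq> 0" using xinz by (simp add: q'_def)
      show "0 < norm \<xi>" using xinz by simp
    next
      fix s :: real assume s: "\<bar>s\<bar> < norm \<xi>"
      have nz: "\<xi> + s *\<^sub>R axis j 1 \<noteq> 0"
      proof
        assume "\<xi> + s *\<^sub>R axis j 1 = 0"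
        then have "\<xi> = - (s *\<^sub>R axis j 1)" by (simp add: eq_neg_iff_add_eq_0)
        then have "norm \<xi> = \<bar>s\<bar>" by simp
        then show False using s by simp
      qed
      have "q' + s *\<^sub>R v = (x + \<tau> *\<^sub>R (\<xi> + s *\<^sub>R axis j 1), \<xi> + s *\<^sub>R axis j 1)"
        by (simp add: q'_def v_def algebra_simps)
      moreover have "(x,\<xi>) + s *\<^sub>R dxi j = (x, \<xi> + s *\<^sub>R axis j 1)" by (simp add: dxi_def)
      ultimately show "\<psi> (q' + s *\<^sub>R v) = \<psi> ((x, \<xi>) + s *\<^sub>R dxi j)" using transl[OF nz] by simp
    next
      show "((\<lambda>s. \<psi> ((x, \<xi>) + s *\<^sub>R dxi j)) has_real_derivative frechet_derivative \<psi> (at (x, \<xi>)) (dxi j)) (at 0)"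
        using dir_deriv[OF dpsi[of "(x,\<xi>)"]] xinz by simp
    qed
    moreover have "D1 q' v = \<tau> * D1 q' (dx j) + D1 q' (dxi j)"
      using lin1[of q'] xinz unfolding v by (simp add: q'_def linear_add linear_scale)
    ultimately show ?thesis by (simp add: q'_def)
  qed
  define B where "B = (\<lambda>\<tau>. dderiv \<psi> (dx j) ((x,\<xi>) + \<tau> *\<^sub>R (\<xi>, 0)))"
  have dB: "(B has_real_derivative frechet_derivative (dderiv \<psi> (dx j)) (at (x,\<xi>)) (\<xi>, 0)) (at 0)"
    unfolding B_def using dir_deriv[OF dP[of "(x,\<xi>)" "dx j"], of "(\<xi>,0)"] xinz by simp
  have B0: "B 0 = D1 (x,\<xi>) (dx j)" by (simp add: B_def dderiv_def D1_def)
  show ?E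
  proof (rule dir_unique[OF dP[of "(x,\<xi>)"], where e=1 and c="\<lambda>\<tau>. D1 (x,\<xi>) (dxi j) - \<tau> * B \<tau>"])
    show "snd (x, \<xi>) \<noteq> 0" using xinz by simp
    show "(0::real) < 1" by simp
  next
    fix t :: real
    show "dderiv \<psi> (dxi j) ((x, \<xi>) + t *\<^sub>R (\<xi>, 0)) = D1 (x, \<xi>) (dxi j) - t * B t"
      using key[of t] by (simp add: B_def dderiv_def D1_def algebra_simps)
  next
    show "((\<lambda>\<tau>. D1 (x, \<xi>) (dxi j) - \<tau> * B \<tau>) has_real_derivative - frechet_derivative \<psi> (at (x, \<xi>)) (dx j)) (at 0)"
      using B0 by (auto intro!: derivative_eq_intros dB simp: D1_def)
  qed
qed

lemma Xt_split: "Xt i (x, \<xi>) = dx i - (\<xi> $ i) *\<^sub>R (\<xi>, 0)"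
  by (simp add: Xt_def dx_def)

lemma Xit_split: "Xit j (y, \<eta>) = dxi j - (\<eta> $ j) *\<^sub>R (0, \<eta>) - (y $ j) *\<^sub>R (\<eta>, 0)"
  by (simp add: Xit_def dxi_def)

lemma parts:
  fixes \<psi> \<phi> :: "(real^'n) \<times> (real^'n) \<Rightarrow> real" and lam :: real and i j :: 'n
  assumes smooth: "smooth_on (UNIV \<times> (UNIV - {0})) \<psi>"
    and homog: "\<And>x \<xi> c. \<xi> \<noteq> 0 \<Longrightarrow> c > 0 \<Longrightarrow> \<psi> (x, c *\<^sub>R \<xi>) = c powr lam * \<psi> (x, \<xi>)"
    and transl: "\<And>x \<xi> \<tau>. \<xi> \<noteq> 0 \<Longrightarrow> \<psi> (x + \<tau> *\<^sub>R \<xi>, \<xi>) = \<psi> (x, \<xi>)"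
    and restr: "\<And>p. p \<in> TS \<Longrightarrow> \<phi> p = \<psi> p"
    and pTS: "p \<in> TS"
  shows "Xop i \<phi> p = frechet_derivative \<psi> (at p) (dx i)" (is ?A)
    and "Xop i (Xiop j \<phi>) p = frechet_derivative (dderiv \<psi> (dxi j)) (at p) (dx i)
           + (snd p $ i) * frechet_derivative \<psi> (at p) (dx j)
           - lam * (snd p $ j) * frechet_derivative \<psi> (at p) (dx i)" (is ?B)
proof -
  note F = psi_facts[of \<psi> lam, OF smooth homog transl, simplified]
  have TSnz: "snd q \<noteq> 0" if "q \<in> TS" for q :: "(real^'n) \<times> (real^'n)"
    using that by (cases q) (auto simp: TS_iff)
  obtain x \<xi> where p: "p = (x, \<xi>)" by fastforce
  have xinz: "\<xi> \<noteq> 0" using TSnz[OF pTS] p by simp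
  define D1 where "D1 = (\<lambda>q. frechet_derivative \<psi> (at q))"
  have lin: "linear (D1 q)" if "q \<in> TS" for q
    using F(1)[OF TSnz[OF that], of "fst q"] unfolding D1_def prod.collapse
    by (blast dest: has_derivative_bounded_linear bounded_linear.linear)
  have Xphi: "Xop i' \<phi> q = D1 q (dx i')" if q: "q \<in> TS" for q i'
  proof -
    obtain y \<eta> where qq: "q = (y, \<eta>)" by fastforce
    have nz: "\<eta> \<noteq> 0" using TSnz[OF q] qq by simp
    obtain \<gamma> where g: "\<forall>t. \<gamma> t \<in> TS" "\<gamma> 0 = q" "(\<gamma> has_derivative (\<lambda>t. t *\<^sub>R Xt i' q)) (at 0)"
      using curve_Xt[OF q] by blast
    have "Xop i' \<phi> q = D1 q (Xt i' q)" unfolding D1_def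
      by (rule TS_deriv[OF q]) (use restr g F(1)[OF nz, of y] qq in auto)
    also have "\<dots> = D1 q (dx i')"
      using lin[OF q] F(3)[OF nz, of y] qq by (simp del: scaleR_Pair add: Xt_split linear_diff linear_scale D1_def)
    finally show ?thesis .
  qed
  show ?A using Xphi[OF pTS] by (simp add: D1_def)
  define G where "G = (\<lambda>q. dderiv \<psi> (dxi j) q - lam * (snd q $ j * \<psi> q))"
  have XiG: "Xiop j \<phi> q = G q" if q: "q \<in> TS" for q
  proof -
    obtain y \<eta> where qq: "q = (y, \<eta>)" by fastforce
    have nz: "\<eta> \<noteq> 0" using TSnz[OF q] qq by simp
    obtain \<gamma> where g: "\<forall>t. \<gamma> t \<in> TS" "\<gamma> 0 = q" "(\<gamma> has_derivative (\<lambda>t. t *\<^sub>R Xit j q)) (at 0)"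
      using curve_Xit[OF q] by blast
    have "Xiop j \<phi> q = D1 q (Xit j q)" unfolding D1_def
      by (rule TS_deriv[OF q]) (use restr g F(1)[OF nz, of y] qq in auto)
    also have "\<dots> = G q"
      using lin[OF q] F(3)[OF nz, of y] F(4)[OF nz, of y] qq
      by (simp del: scaleR_Pair add: Xit_split linear_diff linear_scale D1_def G_def dderiv_def)
    finally show ?thesis .
  qed
  define DP where "DP = frechet_derivative (dderiv \<psi> (dxi j)) (at p)"
  have dG: "(G has_derivative (\<lambda>v. DP v - lam * (snd v $ j * \<psi> p + \<xi> $ j * D1 p v))) (at p)"
    unfolding G_def DP_def D1_def
    using F(1)[OF xinz, of x] F(2)[OF xinz, where x=x and v="dxi j"] p
    by (auto intro!: derivative_eq_intros bounded_linear.has_derivative[OF bounded_linear_vec_nth]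
        simp: algebra_simps)
  obtain \<gamma> where g: "\<forall>t. \<gamma> t \<in> TS" "\<gamma> 0 = p" "(\<gamma> has_derivative (\<lambda>t. t *\<^sub>R Xt i p)) (at 0)"
    using curve_Xt[OF pTS] by blast
  have "Xop i (Xiop j \<phi>) p = DP (Xt i p) - lam * (snd (Xt i p) $ j * \<psi> p + \<xi> $ j * D1 p (Xt i p))"
    by (rule TS_deriv[OF pTS _ dG]) (use XiG g in auto)
  also have "snd (Xt i p) = 0" by (simp add: p Xt_def)
  also have "D1 p (Xt i p) = D1 p (dx i)"
    using lin[OF pTS] F(3)[OF xinz, of x] p by (simp del: scaleR_Pair add: Xt_split linear_diff linear_scale D1_def)
  also have "DP (Xt i p) = DP (dx i) + (\<xi> $ i) * D1 p (dx j)"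
  proof -
    have "linear DP" using F(2)[OF xinz, where x=x and v="dxi j"] p unfolding DP_def
      by (blast dest: has_derivative_bounded_linear bounded_linear.linear)
    then show ?thesis using F(5)[OF xinz, where x=x and j=j] p
      by (simp del: scaleR_Pair add: Xt_split linear_diff linear_scale D1_def DP_def)
  qed
  finally show ?B by (simp add: p DP_def D1_def algebra_simps)
qed

theorem lemma3p1:
  fixes \<psi> \<phi> :: "(real^'n) \<times> (real^'n) \<Rightarrow> real" and lam :: real and i j :: 'n
  assumes smooth: "smooth_on (UNIV \<times> (UNIV - {0})) \<psi>"
    and homog: "\<And>x \<xi> c. \<xi> \<noteq> 0 \<Longrightarrow> c > 0 \<Longrightarrow> \<psi> (x, c *\<^sub>R \<xi>) = c powr lam * \<psi> (x, \<xi>)"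
    and transl: "\<And>x \<xi> \<tau>. \<xi> \<noteq> 0 \<Longrightarrow> \<psi> (x + \<tau> *\<^sub>R \<xi>, \<xi>) = \<psi> (x, \<xi>)"
    and restr: "\<And>p. p \<in> TS \<Longrightarrow> \<phi> p = \<psi> p"
  shows "\<forall>p \<in> TS. John i j \<psi> p =
           calJ i j \<phi> p - (lam + 1) * ((snd p $ i) * Xop j \<phi> p - (snd p $ j) * Xop i \<phi> p)"
proof
  fix p :: "(real^'n) \<times> (real^'n)" assume pTS: "p \<in> TS"
  note P = parts[of \<psi> lam \<phi>, OF smooth homog transl restr, simplified, OF pTS]
  show "John i j \<psi> p =
           calJ i j \<phi> p - (lam + 1) * ((snd p $ i) * Xop j \<phi> p - (snd p $ j) * Xop i \<phi> p)"
    unfolding John_def calJ_def dderiv_def[of "dderiv \<psi> (dxi j)"] dderiv_def[of "dderiv \<psi> (dxi i)"]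
    using P(1)[of i] P(1)[of j] P(2)[of i j] P(2)[of j i]
    by (simp add: algebra_simps)
qed

end
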